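(* Let $(P,\leq,{}',M,R,0,1)$ be an operator residuated poset satisfying operator divisibility, and assume that for all $x,y\in P$ $M(x,y)=L(U(x,y'),y)$ and $R(x,y)=LU(x',L(x,y))$. Then $(P,\leq,{}',0,1)$ is a generalized orthomodular poset.
   Context: For a poset $(P,\leq)$ and $A\subseteq P$: $L(A):=\{x\in P\mid x\leq a\text{ for all }a\in A\}$, $U(A):=\{x\in P\mid a\leq x\text{ for all }a\in A\}$; $L(a,b)=L(\{a,b\})$, $L(a,B)=L(\{a\}\cup B)$, $LU(A)=L(U(A))$, and similarly for $U$. An orthoposet is a bounded poset $(P,\leq,{}',0,1)$ with a unary operation $'$ that is an antitone involution ($x''=x$; $x\leq y\Rightarrow y'\leq x'$) and a complementation ($L(x,x')=\{0\}$, $U(x,x')=\{1\}$). A generalized orthomodular poset is an orthoposet such that for all $x,y$, $x\leq y$ implies $U(y)=U(x,L(x',y))$. An operator residuated poset is a tuple $(P,\leq,{}',M,R,0,1)$ where $(P,\leq,0,1)$ is a bounded poset, $'$ an antitone unary operation, and $M,R:P^2\to 2^P$ satisfy for all $x,y,z\in P$: $M(x,y)\subseteq L(z)$ iff $L(x)\subseteq R(y,z)$; $R(x,0)=L(x')$; $R(x,x'')=R(x'',x)=P$. It satisfies operator divisibility if $x\leq y$ implies $L(y,U(R(y,x)))=L(x)$. *)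

theory Defs
  imports Main
begin

definition Lo :: "('a \<Rightarrow> 'a \<Rightarrow> bool) \<Rightarrow> 'a set \<Rightarrow> 'a set" where
  "Lo le A = {x. \<forall>a\<in>A. le x a}"

definition Up :: "('a \<Rightarrow> 'a \<Rightarrow> bool) \<Rightarrow> 'a set \<Rightarrow> 'a set" where
  "Up le A = {x. \<forall>a\<in>A. le a x}"

definition bounded_poset :: "('a \<Rightarrow> 'a \<Rightarrow> bool) \<Rightarrow> 'a \<Rightarrow> 'a \<Rightarrow> bool" where
  "bounded_poset le z t \<longleftrightarrow>
     (\<forall>x. le x x) \<and>
     (\<forall>x y. le x y \<and> le y x \<longrightarrow> x = y) \<and>
     (\<forall>x y w. le x y \<and> le y w \<longrightarrow> le x w) \<and>
     (\<forall>x. le z x \<and> le x t)"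

definition antitone_op :: "('a \<Rightarrow> 'a \<Rightarrow> bool) \<Rightarrow> ('a \<Rightarrow> 'a) \<Rightarrow> bool" where
  "antitone_op le c \<longleftrightarrow> (\<forall>x y. le x y \<longrightarrow> le (c y) (c x))"

definition orthoposet :: "('a \<Rightarrow> 'a \<Rightarrow> bool) \<Rightarrow> ('a \<Rightarrow> 'a) \<Rightarrow> 'a \<Rightarrow> 'a \<Rightarrow> bool" where
  "orthoposet le c z t \<longleftrightarrow>
     bounded_poset le z t \<and>
     (\<forall>x. c (c x) = x) \<and> antitone_op le c \<and>
     (\<forall>x. Lo le {x, c x} = {z} \<and> Up le {x, c x} = {t})"

definition generalized_orthomodular_poset ::
  "('a \<Rightarrow> 'a \<Rightarrow> bool) \<Rightarrow> ('a \<Rightarrow> 'a) \<Rightarrow> 'a \<Rightarrow> 'a \<Rightarrow> bool" where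
  "generalized_orthomodular_poset le c z t \<longleftrightarrow>
     orthoposet le c z t \<and>
     (\<forall>x y. le x y \<longrightarrow> Up le {y} = Up le ({x} \<union> Lo le {c x, y}))"

definition operator_residuated_poset ::
  "('a \<Rightarrow> 'a \<Rightarrow> bool) \<Rightarrow> ('a \<Rightarrow> 'a) \<Rightarrow> ('a \<Rightarrow> 'a \<Rightarrow> 'a set) \<Rightarrow>
   ('a \<Rightarrow> 'a \<Rightarrow> 'a set) \<Rightarrow> 'a \<Rightarrow> 'a \<Rightarrow> bool" where
  "operator_residuated_poset le c M R z t \<longleftrightarrow>
     bounded_poset le z t \<and> antitone_op le c \<and>
     (\<forall>x y w. M x y \<subseteq> Lo le {w} \<longleftrightarrow> Lo le {x} \<subseteq> R y w) \<and>
     (\<forall>x. R x z = Lo le {c x}) \<and>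
     (\<forall>x. R x (c (c x)) = UNIV \<and> R (c (c x)) x = UNIV)"

definition operator_divisibility ::
  "('a \<Rightarrow> 'a \<Rightarrow> bool) \<Rightarrow> ('a \<Rightarrow> 'a \<Rightarrow> 'a set) \<Rightarrow> bool" where
  "operator_divisibility le R \<longleftrightarrow>
     (\<forall>x y. le x y \<longrightarrow> Lo le ({y} \<union> Up le (R y x)) = Lo le {x})"

end

theory Submission
  imports Defs
begin

theorem mainTheorem3:
  fixes le :: "'a \<Rightarrow> 'a \<Rightarrow> bool" and c :: "'a \<Rightarrow> 'a"
    and M R :: "'a \<Rightarrow> 'a \<Rightarrow> 'a set" and z t :: 'a
  assumes "operator_residuated_poset le c M R z t"
    and "operator_divisibility le R"
    and "\<And>x y. M x y = Lo le (Up le {x, c y} \<union> {y})"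
    and "\<And>x y. R x y = Lo le (Up le ({c x} \<union> Lo le {x, y}))"
  shows "generalized_orthomodular_poset le c z t"
proof -
  note H = assms(1)[unfolded operator_residuated_poset_def bounded_poset_def antitone_op_def]
  have refl: "\<And>x. le x x" using H by blast
  have anti: "\<And>x y. le x y \<Longrightarrow> le y x \<Longrightarrow> x = y" using H by blast
  have trans: "\<And>x y w. le x y \<Longrightarrow> le y w \<Longrightarrow> le x w" using H by blast
  have bot: "\<And>x. le z x" and top: "\<And>x. le x t" using H by blast+
  have ant: "\<And>x y. le x y \<Longrightarrow> le (c y) (c x)" using H by blast
  have res: "\<And>x y w. M x y \<subseteq> Lo le {w} \<longleftrightarrow> Lo le {x} \<subseteq> R y w" using H by blast
  have Rz: "\<And>x. R x z = Lo le {c x}" using H by blast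
  have RU: "\<And>x. R x (c (c x)) = UNIV" "\<And>x. R (c (c x)) x = UNIV" using H by blast+
  have div: "\<And>x y. le x y \<Longrightarrow> Lo le ({y} \<union> Up le (R y x)) = Lo le {x}"
    using assms(2) unfolding operator_divisibility_def by blast
  have xM: "x \<in> M t x" for x
    unfolding assms(3) Lo_def Up_def using refl top anti by (auto, metis)
  have inv: "c (c x) = x" for x
  proof -
    have "M t x \<subseteq> Lo le {c (c x)}" using res RU(1)[of x] by blast
    with xM have 1: "le x (c (c x))" unfolding Lo_def by auto
    have "M t (c (c x)) \<subseteq> Lo le {x}" using res RU(2)[of x] by blast
    with xM have 2: "le (c (c x)) x" unfolding Lo_def by auto
    from 1 2 anti show ?thesis by blast
  qed
  have RR: "R x x = UNIV" for x using RU(1)[of x] inv by simp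
  have Ux: "Up le {x, c x} = {t}" for x
  proof
    show "Up le {x, c x} \<subseteq> {t}"
    proof
      fix u assume u: "u \<in> Up le {x, c x}"
      have "t \<in> R x x" using RR by blast
      hence h: "\<And>w. le (c x) w \<Longrightarrow> (\<And>a. le a x \<Longrightarrow> le a w) \<Longrightarrow> le t w"
        unfolding assms(4) Lo_def Up_def by auto
      have "le x u" "le (c x) u" using u unfolding Up_def by auto
      hence "le t u" using h[of u] trans[of _ x u] by simp
      thus "u \<in> {t}" using top anti by blast
    qed
    show "{t} \<subseteq> Up le {x, c x}" using top unfolding Up_def by auto
  qed
  have Lx: "Lo le {x, c x} = {z}" for x
  proof
    show "Lo le {x, c x} \<subseteq> {z}"
    proof
      fix w assume w: "w \<in> Lo le {x, c x}"
      have wx: "le w x" "le w (c x)" using w unfolding Lo_def by auto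
      have "w \<in> Lo le ({x} \<union> Up le (R x z))"
        unfolding Rz Lo_def
      proof (intro CollectI ballI)
        fix a assume "a \<in> {x} \<union> Up le {xa. \<forall>a\<in>{c x}. le xa a}"
        hence "a = x \<or> le (c x) a" unfolding Up_def using refl by auto
        thus "le w a" using wx trans by blast
      qed
      hence "w \<in> Lo le {z}" using div[OF bot] by blast
      thus "w \<in> {z}" using bot anti unfolding Lo_def by auto
    qed
    show "{z} \<subseteq> Lo le {x, c x}" using bot unfolding Lo_def by auto
  qed
  have OM: "Up le {y} = Up le ({x} \<union> Lo le {c x, y})" if xy: "le x y" for x y
  proof (rule set_eqI)
    fix v
    show "v \<in> Up le {y} \<longleftrightarrow> v \<in> Up le ({x} \<union> Lo le {c x, y})"
    proof
      assume "v \<in> Up le {y}"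
      hence yv: "le y v" unfolding Up_def by auto
      show "v \<in> Up le ({x} \<union> Lo le {c x, y})" unfolding Up_def
      proof (intro CollectI ballI)
        fix a assume "a \<in> {x} \<union> Lo le {c x, y}"
        hence "a = x \<or> le a y" unfolding Lo_def by auto
        thus "le a v" using xy yv trans by blast
      qed
    next
      assume v: "v \<in> Up le ({x} \<union> Lo le {c x, y})"
      have xv: "le x v" using v unfolding Up_def by auto
      have hs: "\<And>s. le s (c x) \<Longrightarrow> le s y \<Longrightarrow> le s v" using v unfolding Up_def Lo_def by auto
      have cyx: "le (c y) (c x)" using ant xy by blast
      have "c v \<in> Lo le ({c x} \<union> Up le (R (c x) (c y)))"
        unfolding Lo_def
      proof (intro CollectI ballI)
        fix a assume a: "a \<in> {c x} \<union> Up le (R (c x) (c y))"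
        show "le (c v) a"
        proof (cases "a = c x")
          case True thus ?thesis using ant xv by simp
        next
          case False
          hence u: "a \<in> Up le (R (c x) (c y))" using a by blast
          have "x \<in> R (c x) (c y)" unfolding assms(4) inv Lo_def Up_def by auto
          hence 1: "le x a" using u unfolding Up_def by auto
          have "c y \<in> R (c x) (c y)" unfolding assms(4) inv Lo_def Up_def
            using cyx refl by auto
          hence 2: "le (c y) a" using u unfolding Up_def by auto
          have "le (c a) (c x)" using ant 1 by blast
          moreover have "le (c a) y" using ant[OF 2] inv by simp
          ultimately have "le (c a) v" using hs by blast
          thus ?thesis using ant inv by metis
        qed
      qed
      hence "c v \<in> Lo le {c y}" using div[OF cyx] by blast
      hence "le (c v) (c y)" unfolding Lo_def by auto
      hence "le y v" using ant inv by metis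
      thus "v \<in> Up le {y}" unfolding Up_def by auto
    qed
  qed
  show ?thesis
    unfolding generalized_orthomodular_poset_def orthoposet_def bounded_poset_def antitone_op_def
  proof (intro conjI)
    show "\<forall>x. le x x" "\<forall>x y. le x y \<and> le y x \<longrightarrow> x = y"
      "\<forall>x y w. le x y \<and> le y w \<longrightarrow> le x w" "\<forall>x. le z x \<and> le x t"
      "\<forall>x y. le x y \<longrightarrow> le (c y) (c x)" using H by blast+
  qed (use inv Ux Lx OM in auto)
qed

end
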